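(* Let $F$ be a CD-function. Then there is a unique strictly positive solution $\varphi:(0,\infty)\to(0,\infty)$ of the ODE $\dot\varphi(t)+F(\varphi(t))=0$ for $t>0$ with $\lim_{t\to0+}\varphi(t)=\infty$. This function is strictly decreasing and log-convex on $(0,\infty)$, and $\lim_{t\to\infty}\varphi(t)=0$.
   Context: A CD-function is a continuous function $F:[0,\infty)\to[0,\infty)$ with $F(0)=0$, such that $x\mapsto F(x)/x$ is strictly increasing on $(0,\infty)$, and $\int_1^\infty dr/F(r)<\infty$. *)

theory Defs
  imports "HOL-Analysis.Analysis"
begin

definition CD_function :: "(real \<Rightarrow> real) \<Rightarrow> bool" where
  "CD_function F \<longleftrightarrow>
     continuous_on {0..} F \<and> (\<forall>x\<ge>0. F x \<ge> 0) \<and> F 0 = 0 \<and>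
     strict_mono_on {0<..} (\<lambda>x. F x / x) \<and>
     (\<lambda>r. 1 / F r) integrable_on {1..}"

definition CD_solution :: "(real \<Rightarrow> real) \<Rightarrow> (real \<Rightarrow> real) \<Rightarrow> bool" where
  "CD_solution F \<phi> \<longleftrightarrow>
     (\<forall>t>0. \<phi> t > 0) \<and>
     (\<forall>t>0. (\<phi> has_real_derivative (- F (\<phi> t))) (at t)) \<and>
     filterlim \<phi> at_top (at_right 0)"

end

theory Submission
  imports Defs
begin

definition Gf :: "(real \<Rightarrow> real) \<Rightarrow> real \<Rightarrow> real" where
  "Gf F x = integral {x..} (\<lambda>r. 1 / F r)"

lemma CD_pos:
  assumes F: "CD_function F" and x: "x > 0"
  shows "F x > 0"
proof -
  have sm: "strict_mono_on {0<..} (\<lambda>x. F x / x)" and nn: "\<forall>x\<ge>0. F x \<ge> 0"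
    using F by (auto simp: CD_function_def)
  have "F (x/2) / (x/2) < F x / x"
    by (rule strict_mono_onD[OF sm]) (use x in auto)
  moreover have "F (x/2) / (x/2) \<ge> 0" using nn x by simp
  ultimately have "F x / x > 0" by linarith
  with x show ?thesis by (simp add: zero_less_divide_iff)
qed

lemma CD_inv_nonneg:
  assumes F: "CD_function F" and x: "x > 0"
  shows "0 \<le> 1 / F x"
  using CD_pos[OF F x] by simp

lemma CD_ratio_le:
  assumes F: "CD_function F" and "0 < x" "x \<le> y"
  shows "F x / x \<le> F y / y"
proof (cases "x = y")
  case False
  then have "x < y" using assms by simp
  have sm: "strict_mono_on {0<..} (\<lambda>x. F x / x)"
    using F by (auto simp: CD_function_def)
  show ?thesis
    by (intro less_imp_le strict_mono_onD[OF sm]) (use assms \<open>x < y\<close> in auto)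
qed simp

lemma CD_cont:
  assumes F: "CD_function F"
  shows "continuous_on {0<..} (\<lambda>r. 1 / F r)"
proof -
  have "continuous_on {0<..} F"
  proof (rule continuous_on_subset)
    show "continuous_on {0..} F" using F by (simp add: CD_function_def)
  qed auto
  moreover have "\<forall>x\<in>{0<..}. F x \<noteq> 0"
  proof
    fix x :: real assume "x \<in> {0<..}"
    then show "F x \<noteq> 0" using CD_pos[OF F, of x] by simp
  qed
  ultimately show ?thesis
    by (intro continuous_on_divide continuous_on_const)
qed

lemma CD_int1:
  assumes F: "CD_function F"
  shows "(\<lambda>r. 1 / F r) absolutely_integrable_on {1..}"
proof -
  have "(\<lambda>r. 1 / F r) integrable_on {1..}" using F by (simp add: CD_function_def)
  then show ?thesis
    by (rule nonnegative_absolutely_integrable_1) (rule CD_inv_nonneg[OF F], auto)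
qed

lemma CD_abs_int:
  assumes F: "CD_function F" and x: "x > 0"
  shows "(\<lambda>r. 1 / F r) absolutely_integrable_on {x..}"
proof (cases "x \<ge> 1")
  case True
  show ?thesis
    by (rule set_integrable_subset[OF CD_int1[OF F]]) (use True in auto)
next
  case False
  have c: "continuous_on {x..1} (\<lambda>r. 1 / F r)"
    by (rule continuous_on_subset[OF CD_cont[OF F]]) (use x in auto)
  have a: "(\<lambda>r. 1 / F r) absolutely_integrable_on {x..1}"
    by (rule nonnegative_absolutely_integrable_1[OF integrable_continuous_interval[OF c]])
       (rule CD_inv_nonneg[OF F], use x in auto)
  have "(\<lambda>r. 1 / F r) absolutely_integrable_on ({x..1} \<union> {1..})"
    using set_integrable_Un[OF a CD_int1[OF F]] by simp
  moreover have "{x..1} \<union> {1..} = {x..}" using False by auto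
  ultimately show ?thesis by simp
qed

lemma CD_int:
  assumes F: "CD_function F" and x: "x > 0"
  shows "(\<lambda>r. 1 / F r) integrable_on {x..}"
  using CD_abs_int[OF assms] set_lebesgue_integral_eq_integral(1) by blast

lemma G_split:
  assumes F: "CD_function F" and "0 < a" "a \<le> b"
  shows "Gf F a = integral {a..b} (\<lambda>r. 1 / F r) + Gf F b"
proof -
  have c: "continuous_on {a..b} (\<lambda>r. 1 / F r)"
    by (rule continuous_on_subset[OF CD_cont[OF F]]) (use assms in auto)
  have "{a..b} \<inter> {b..} = {b}" using assms by auto
  then have n: "negligible ({a..b} \<inter> {b..})" by simp
  have "integral ({a..b} \<union> {b..}) (\<lambda>r. 1 / F r) = integral {a..b} (\<lambda>r. 1 / F r) + integral {b..} (\<lambda>r. 1 / F r)"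
    by (rule integral_Un[OF integrable_continuous_interval[OF c] CD_int[OF F] n]) (use assms in simp)
  moreover have "{a..b} \<union> {b..} = {a..}" using assms by auto
  ultimately show ?thesis by (simp add: Gf_def)
qed

lemma G_nonneg:
  assumes F: "CD_function F" and x: "x > 0"
  shows "Gf F x \<ge> 0"
  unfolding Gf_def by (rule integral_nonneg[OF CD_int[OF assms]]) (rule CD_inv_nonneg[OF F], use x in auto)

lemma G_deriv:
  assumes F: "CD_function F" and x: "x > 0"
  shows "(Gf F has_real_derivative - (1 / F x)) (at x)"
proof -
  define a where "a = x/2"
  define b where "b = 2*x"
  have ab: "0 < a" "a < x" "x < b" using x by (auto simp: a_def b_def)
  have c: "continuous_on {a..b} (\<lambda>r. 1 / F r)"
    by (rule continuous_on_subset[OF CD_cont[OF F]]) (use ab in auto)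
  have "((\<lambda>y. integral {a..y} (\<lambda>r. 1 / F r)) has_real_derivative 1 / F x) (at x within {a..b})"
    by (rule integral_has_real_derivative[OF c]) (use ab in auto)
  then have d: "((\<lambda>y. integral {a..y} (\<lambda>r. 1 / F r)) has_real_derivative 1 / F x) (at x)"
    using at_within_interior[of x "{a..b}"] ab by simp
  have "((\<lambda>y. Gf F a - integral {a..y} (\<lambda>r. 1 / F r)) has_real_derivative - (1 / F x)) (at x)"
    using d by (auto intro!: derivative_eq_intros)
  then show ?thesis
  proof (rule has_field_derivative_transform_within_open)
    show "open {a<..<b}" by simp
    show "x \<in> {a<..<b}" using ab by simp
    fix y assume "y \<in> {a<..<b}"
    then show "Gf F a - integral {a..y} (\<lambda>r. 1 / F r) = Gf F y"
      using G_split[OF F, of a y] ab by simp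
  qed
qed


lemma G_zero:
  assumes F: "CD_function F"
  shows "filterlim (Gf F) at_top (at_right 0)"
proof -
  define c where "c = F 1"
  have c: "c > 0" using CD_pos[OF F, of 1] by (simp add: c_def)
  have bound: "- ln x / c \<le> Gf F x" if x: "0 < x" "x < 1" for x
  proof -
    have der: "((\<lambda>r. ln r / c) has_vector_derivative inverse r / c) (at r within {x..1})"
      if "r \<in> {x..1}" for r
    proof -
      have "r > 0" using that x by simp
      then have "((\<lambda>r. ln r / c) has_real_derivative inverse r / c) (at r)"
        by (intro DERIV_cdivide DERIV_ln)
      then have "((\<lambda>r. ln r / c) has_real_derivative inverse r / c) (at r within {x..1})"
        by (rule has_field_derivative_at_within)
      then show ?thesis by (simp add: has_real_derivative_iff_has_vector_derivative)
    qed
    have hi: "((\<lambda>r. inverse r / c) has_integral (ln 1 / c - ln x / c)) {x..1}"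
      by (rule fundamental_theorem_of_calculus[OF _ der]) (use x in auto)
    have ce: "continuous_on {x..1} (\<lambda>r. 1 / F r)"
      by (rule continuous_on_subset[OF CD_cont[OF F]]) (use x in auto)
    have le: "inverse r / c \<le> 1 / F r" if r: "r \<in> {x..1}" for r
    proof -
      have r0: "r > 0" using r x by auto
      have "F r / r \<le> F 1 / 1" by (rule CD_ratio_le[OF F]) (use r x in auto)
      then have "F r \<le> c * r" using r0 by (simp add: c_def pos_divide_le_eq)
      moreover have "F r > 0" using CD_pos[OF F r0] .
      ultimately have "1 / (c * r) \<le> 1 / F r"
        by (intro divide_left_mono) (use c r0 in auto)
      moreover have "inverse r / c = 1 / (c * r)" using c r0 by (simp add: field_simps)
      ultimately show ?thesis by linarith
    qed
    have "- ln x / c = integral {x..1} (\<lambda>r. inverse r / c)"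
      using integral_unique[OF hi] by simp
    also have "\<dots> \<le> integral {x..1} (\<lambda>r. 1 / F r)"
      by (rule integral_le[OF has_integral_integrable[OF hi] integrable_continuous_interval[OF ce] le])
    also have "\<dots> \<le> Gf F x"
      using G_split[OF F, of x 1] G_nonneg[OF F, of 1] x by simp
    finally show ?thesis .
  qed
  have l: "filterlim (\<lambda>x. - ln x) at_top (at_right (0::real))"
    by (rule filterlim_compose[OF filterlim_uminus_at_top_at_bot ln_at_0])
  have "filterlim (\<lambda>x. (1 / c) * (- ln x)) at_top (at_right (0::real))"
    by (rule filterlim_tendsto_pos_mult_at_top[OF tendsto_const _ l]) (use c in simp)
  moreover have "(\<lambda>x. (1 / c) * (- ln x)) = (\<lambda>x. - ln x / c)"
    by (auto simp: fun_eq_iff)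
  ultimately have "filterlim (\<lambda>x. - ln x / c) at_top (at_right (0::real))"
    by simp
  moreover have "eventually (\<lambda>x. - ln x / c \<le> Gf F x) (at_right 0)"
    using eventually_at_right_real[OF zero_less_one] by eventually_elim (intro bound, auto)
  ultimately show ?thesis by (rule filterlim_at_top_mono)
qed

lemma G_top:
  assumes F: "CD_function F"
  shows "(Gf F \<longlongrightarrow> 0) at_top"
proof -
  let ?f = "\<lambda>r. 1 / F r"
  have A: "((\<lambda>b. LINT r:{1..b}|lebesgue. ?f r) \<longlongrightarrow> (LINT r:{1..}|lebesgue. ?f r)) at_top"
    by (rule tendsto_set_lebesgue_integral_at_top) (use CD_int1[OF F] in auto)
  have I: "(LINT r:{1..}|lebesgue. ?f r) = integral {1..} ?f"
    by (rule set_lebesgue_integral_eq_integral(2)[OF CD_int1[OF F]])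
  have e: "eventually (\<lambda>b. (LINT r:{1..b}|lebesgue. ?f r) = integral {1..b} ?f) at_top"
    using eventually_ge_at_top[of "1::real"]
  proof eventually_elim
    case (elim b)
    have "set_integrable lebesgue {1..b} ?f"
      by (rule set_integrable_subset[OF CD_int1[OF F]]) auto
    then show ?case by (rule set_lebesgue_integral_eq_integral(2))
  qed
  have B: "((\<lambda>b. integral {1..b} ?f) \<longlongrightarrow> integral {1..} ?f) at_top"
    using A tendsto_cong[OF e] I by simp
  have C: "((\<lambda>b. Gf F 1 - integral {1..b} ?f) \<longlongrightarrow> Gf F 1 - integral {1..} ?f) at_top"
    by (intro tendsto_intros B)
  then have C': "((\<lambda>b. Gf F 1 - integral {1..b} ?f) \<longlongrightarrow> 0) at_top"
    by (simp add: Gf_def)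
  have e2: "eventually (\<lambda>b. Gf F 1 - integral {1..b} ?f = Gf F b) at_top"
    using eventually_ge_at_top[of "1::real"]
    by eventually_elim (use G_split[OF F, of 1] in simp)
  show ?thesis using C' tendsto_cong[OF e2] by simp
qed

theorem lemma3p5:
  fixes F :: "real \<Rightarrow> real"
  assumes "CD_function F"
  shows "\<exists>\<phi>. CD_solution F \<phi> \<and>
           (\<forall>\<psi>. CD_solution F \<psi> \<longrightarrow> (\<forall>t>0. \<psi> t = \<phi> t)) \<and>
           strict_antimono_on {0<..} \<phi> \<and>
           convex_on {0<..} (\<lambda>t. ln (\<phi> t)) \<and>
           (\<phi> \<longlongrightarrow> 0) at_top"
proof -
  note F = assms
  define G where "G = Gf F"
  have Gd: "(G has_real_derivative - (1 / F x)) (at x)" if "x > 0" for x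
    unfolding G_def by (rule G_deriv[OF F that])
  have Gdec: "G y < G x" if "0 < x" "x < y" for x y
  proof (rule DERIV_neg_imp_decreasing[OF that(2)])
    fix z assume "x \<le> z" "z \<le> y"
    then have "z > 0" using that by simp
    then show "\<exists>d. DERIV G z :> d \<and> d < 0"
      using Gd[of z] CD_pos[OF F, of z] by auto
  qed
  have Gle: "G y \<le> G x" if "0 < x" "x \<le> y" for x y
    using Gdec[of x y] that by (cases "x = y") auto
  have Ginj: "x = y" if "0 < x" "0 < y" "G x = G y" for x y
    using Gdec[of x y] Gdec[of y x] that by (cases x y rule: linorder_cases) auto
  have Gcont: "continuous_on {0<..} G"
    by (rule continuous_at_imp_continuous_on) (use Gd DERIV_isCont in auto)
  have Gpos: "G x > 0" if "x > 0" for x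
    using Gdec[of x "x+1"] G_nonneg[OF F, of "x+1"] that by (simp add: G_def)
  have Gz: "filterlim G at_top (at_right 0)" unfolding G_def by (rule G_zero[OF F])
  have Gt: "(G \<longlongrightarrow> 0) at_top" unfolding G_def by (rule G_top[OF F])
  have Gsurj: "\<exists>x>0. G x = t" if t: "t > 0" for t
  proof -
    have "eventually (\<lambda>x. t \<le> G x) (at_right 0)"
      using Gz by (simp add: filterlim_at_top)
    then obtain b where b: "b > 0" "\<And>y. y > 0 \<Longrightarrow> y < b \<Longrightarrow> t \<le> G y"
      by (auto simp: eventually_at_right_field)
    define a where "a = b / 2"
    have a: "a > 0" "t \<le> G a" using b by (auto simp: a_def)
    have "eventually (\<lambda>x. G x < t) at_top"
      using order_tendstoD(2)[OF Gt t] .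
    then obtain N where N: "\<And>n. n \<ge> N \<Longrightarrow> G n < t"
      by (auto simp: eventually_at_top_linorder)
    define c where "c = max N a"
    have c: "a \<le> c" "G c < t" using N by (auto simp: c_def)
    have "continuous_on {a..c} G"
      by (rule continuous_on_subset[OF Gcont]) (use a in auto)
    then obtain x where x: "a \<le> x" "x \<le> c" "G x = t"
      using IVT2'[of G c t a] c a by auto
    show ?thesis using x a by (intro exI[of _ x]) auto
  qed
  define \<phi> where "\<phi> t = (THE x. x > 0 \<and> G x = t)" for t
  have phi: "\<phi> t > 0 \<and> G (\<phi> t) = t" if "t > 0" for t
  proof -
    have "\<exists>!x. x > 0 \<and> G x = t" using Gsurj[OF that] Ginj by blast
    then show ?thesis unfolding \<phi>_def by (rule theI')
  qed
  have phiG: "\<phi> (G x) = x" if "x > 0" for x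
    unfolding \<phi>_def by (rule the_equality) (use that Ginj in auto)
  have phid: "(\<phi> has_real_derivative - F (\<phi> t)) (at t)" if t: "t > 0" for t
  proof -
    define x where "x = \<phi> t"
    have x: "x > 0" "G x = t" using phi[OF t] by (auto simp: x_def)
    have Fx: "F x > 0" using CD_pos[OF F x(1)] .
    have "(\<phi> has_derivative (*) (- F x)) (at (G x))"
    proof (rule has_derivative_inverse_strong[of "{0<..}" x G \<phi> "(*) (- (1 / F x))"])
      show "(G has_derivative (*) (- (1 / F x))) (at x)"
        using Gd[OF x(1)] unfolding has_field_derivative_def .
      show "(*) (- (1 / F x)) \<circ> (*) (- F x) = id"
        using Fx by (auto simp: fun_eq_iff)
    qed (use x Gcont phiG in auto)
    from this[unfolded x_def, unfolded phi[OF t, THEN conjunct2]] show ?thesis unfolding has_field_derivative_def .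
  qed
  have sol: "CD_solution F \<phi>"
    unfolding CD_solution_def
  proof (intro conjI allI impI)
    show "filterlim \<phi> at_top (at_right 0)"
      unfolding filterlim_at_top
    proof
      fix Z :: real
      define M where "M = max Z 1"
      have M: "M > 0" "Z \<le> M" by (auto simp: M_def)
      show "eventually (\<lambda>t. Z \<le> \<phi> t) (at_right 0)"
        using eventually_at_right_real[OF Gpos[OF M(1)]]
      proof (rule eventually_mono)
        fix t assume t: "t \<in> {0<..<G M}"
        show "Z \<le> \<phi> t"
        proof (rule ccontr)
          assume "\<not> Z \<le> \<phi> t"
          then have "\<phi> t < M" using M by simp
          then have "G M < G (\<phi> t)" using Gdec[of "\<phi> t" M] phi[of t] t by auto
          then show False using phi[of t] t by auto
        qed
      qed
    qed
  qed (use phi phid in auto)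
  have uniq: "\<psi> t = \<phi> t" if psi: "CD_solution F \<psi>" and t: "t > 0" for \<psi> t
  proof -
    have pp: "\<And>t. t > 0 \<Longrightarrow> \<psi> t > 0"
      and pd: "\<And>t. t > 0 \<Longrightarrow> (\<psi> has_real_derivative (- F (\<psi> t))) (at t)"
      and pl: "filterlim \<psi> at_top (at_right 0)"
      using psi by (auto simp: CD_solution_def)
    have hd: "((\<lambda>t. G (\<psi> t) - t) has_real_derivative 0) (at s within {0<..})" if s: "s > 0" for s
    proof -
      have "((\<lambda>t. G (\<psi> t)) has_real_derivative (- (1 / F (\<psi> s))) * (- F (\<psi> s))) (at s)"
        by (rule DERIV_chain2[OF Gd[OF pp[OF s]] pd[OF s]])
      moreover have "(- (1 / F (\<psi> s))) * (- F (\<psi> s)) = 1"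
        using CD_pos[OF F pp[OF s]] by simp
      ultimately have "((\<lambda>t. G (\<psi> t)) has_real_derivative 1) (at s)" by simp
      then have "((\<lambda>t. G (\<psi> t) - t) has_real_derivative 1 - 1) (at s)"
        by (intro derivative_intros)
      then show ?thesis by (simp add: has_field_derivative_at_within)
    qed
    obtain c where c: "\<And>s. s \<in> {0<..} \<Longrightarrow> G (\<psi> s) - s = c"
      using has_field_derivative_zero_constant[of "{0<..}" "\<lambda>t. G (\<psi> t) - t"] hd by auto
    have l1: "((\<lambda>t. G (\<psi> t) - t) \<longlongrightarrow> 0 - 0) (at_right 0)"
      by (intro tendsto_diff filterlim_compose[OF Gt pl] tendsto_ident_at)
    have l2: "((\<lambda>t. G (\<psi> t) - t) \<longlongrightarrow> c) (at_right 0)"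
      by (rule tendsto_eventually) (use eventually_at_right_real[OF zero_less_one] c in \<open>auto elim: eventually_mono\<close>)
    have "c = 0" using tendsto_unique[OF _ l2 l1] by simp
    then have "G (\<psi> t) = G (\<phi> t)" using c[of t] phi[OF t] t by auto
    then show ?thesis using Ginj pp[OF t] phi[OF t] by blast
  qed
  have anti: "strict_antimono_on {0<..} \<phi>"
  proof (rule monotone_onI)
    fix r s :: real assume rs: "r \<in> {0<..}" "s \<in> {0<..}" "r < s"
    show "\<phi> s < \<phi> r"
    proof (rule ccontr)
      assume "\<not> \<phi> s < \<phi> r"
      then have "G (\<phi> s) \<le> G (\<phi> r)" using Gle[of "\<phi> r" "\<phi> s"] phi rs by auto
      then show False using phi rs by auto
    qed
  qed
  have conv: "convex_on {0<..} (\<lambda>t. ln (\<phi> t))"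
  proof (rule convex_on_realI[where f' = "\<lambda>t. - (F (\<phi> t) / \<phi> t)"])
    show "connected {0::real<..}" by simp
    fix t :: real assume t: "t \<in> {0<..}"
    have "((\<lambda>t. ln (\<phi> t)) has_real_derivative inverse (\<phi> t) * - F (\<phi> t)) (at t)"
      by (rule DERIV_chain2[OF DERIV_ln phid]) (use phi t in auto)
    moreover have "inverse (\<phi> t) * - F (\<phi> t) = - (F (\<phi> t) / \<phi> t)"
      by (simp add: field_simps)
    ultimately show "((\<lambda>t. ln (\<phi> t)) has_real_derivative - (F (\<phi> t) / \<phi> t)) (at t)"
      by simp
  next
    fix x y :: real assume xy: "x \<in> {0<..}" "y \<in> {0<..}" "x \<le> y"
    have "\<phi> y \<le> \<phi> x"
    proof (cases "x = y")
      case False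
      then have "x < y" using xy by simp
      then show ?thesis using monotone_onD[OF anti, of x y] xy by simp
    qed simp
    then have "F (\<phi> y) / \<phi> y \<le> F (\<phi> x) / \<phi> x"
      by (intro CD_ratio_le[OF F]) (use phi xy in auto)
    then show "- (F (\<phi> x) / \<phi> x) \<le> - (F (\<phi> y) / \<phi> y)" by simp
  qed
  have lim: "(\<phi> \<longlongrightarrow> 0) at_top"
  proof (rule order_tendstoI)
    fix a :: real assume a: "a < 0"
    show "eventually (\<lambda>t. a < \<phi> t) at_top"
      using eventually_gt_at_top[of "0::real"]
    proof eventually_elim
      case (elim t)
      show ?case using phi[OF elim] a by linarith
    qed
  next
    fix a :: real assume a: "0 < a"
    show "eventually (\<lambda>t. \<phi> t < a) at_top"
      using eventually_gt_at_top[of "G a"] eventually_gt_at_top[of "0::real"]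
    proof eventually_elim
      case (elim t)
      show ?case
      proof (rule ccontr)
        assume "\<not> \<phi> t < a"
        then have "G (\<phi> t) \<le> G a" using Gle[of a "\<phi> t"] a by auto
        then show False using phi[of t] elim by auto
      qed
    qed
  qed
  show ?thesis using sol uniq anti conv lim by blast
qed

end
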